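(* Let $n\ge 2$ and let $\Omega\subset\mathbb{R}^n$ be a smooth bounded strictly convex domain. Let $f,g$ be positive $C^2$ functions of one real variable with $G(s):=g(s)+2s\,g'(s)>0$ for $s>0$. Let $u$ be the solution of \[ \mathrm{div}\big(g(|\nabla u|^2)\nabla u\big)=f(u)\,G(|\nabla u|^2)\ \text{in }\Omega,\qquad u=0\ \text{on }\partial\Omega, \] let $F(y)=\int_y^0 f(s)\,ds$ for $y\le 0$, and $\Phi(\mathbf{x};\beta)=|\nabla u(\mathbf{x})|^2-\beta F(u(\mathbf{x}))$. If $\beta\in[1,2]$, then $\Phi(\cdot;\beta)$ is not identically constant on $\overline\Omega$. *)

theory Defs
  imports "HOL-Analysis.Analysis"
begin

definition pd :: "'a::euclidean_space \<Rightarrow> ('a \<Rightarrow> real) \<Rightarrow> 'a \<Rightarrow> real" where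
  "pd b f x = frechet_derivative f (at x) b"

fun Ck :: "nat \<Rightarrow> 'a::euclidean_space set \<Rightarrow> ('a \<Rightarrow> real) \<Rightarrow> bool" where
  "Ck 0 U f = continuous_on U f"
| "Ck (Suc k) U f = (continuous_on U f \<and> (\<forall>x\<in>U. f differentiable (at x))
                      \<and> (\<forall>b\<in>Basis. Ck k U (pd b f)))"

definition smooth_fun :: "('a::euclidean_space \<Rightarrow> real) \<Rightarrow> bool" where
  "smooth_fun f \<longleftrightarrow> (\<forall>k. Ck k UNIV f)"

definition grad :: "('a::euclidean_space \<Rightarrow> real) \<Rightarrow> 'a \<Rightarrow> 'a" where
  "grad u x = (\<Sum>b\<in>Basis. pd b u x *\<^sub>R b)"

definition divg :: "('a::euclidean_space \<Rightarrow> 'a) \<Rightarrow> 'a \<Rightarrow> real" where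
  "divg V x = (\<Sum>b\<in>Basis. pd b (\<lambda>y. V y \<bullet> b) x)"

definition smooth_bounded_domain :: "'a::euclidean_space set \<Rightarrow> bool" where
  "smooth_bounded_domain \<Omega> \<longleftrightarrow> \<Omega> \<noteq> {} \<and> open \<Omega> \<and> connected \<Omega> \<and> bounded \<Omega> \<and>
     (\<exists>\<rho>. smooth_fun \<rho> \<and> \<Omega> = {x. \<rho> x < 0} \<and> (\<forall>x. \<rho> x = 0 \<longrightarrow> grad \<rho> x \<noteq> 0))"

definition strictly_convex_set :: "'a::euclidean_space set \<Rightarrow> bool" where
  "strictly_convex_set \<Omega> \<longleftrightarrow>
     (\<forall>x\<in>closure \<Omega>. \<forall>y\<in>closure \<Omega>. x \<noteq> y \<longrightarrow> open_segment x y \<subseteq> \<Omega>)"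

definition Fprim :: "(real \<Rightarrow> real) \<Rightarrow> real \<Rightarrow> real" where
  "Fprim f y = integral {y..0} f"

end

theory Submission
  imports Defs
begin


lemma intpos:
  fixes f :: "real \<Rightarrow> real" and y :: real
  assumes "continuous_on UNIV f" "\<forall>s. f s > 0" "y < 0"
  shows "integral {y..0} f > 0"
proof -
  have c: "continuous_on {y..0} f" using assms(1) continuous_on_subset by blast
  obtain z where z: "z \<in> {y..0}" "\<forall>t\<in>{y..0}. f z \<le> f t"
    using continuous_attains_inf[OF compact_Icc _ c] assms(3) by auto
  have "integral {y..0} (\<lambda>_. f z) \<le> integral {y..0} f"
    by (rule integral_le) (use c z in \<open>auto intro: integrable_continuous_interval\<close>)
  moreover have "integral {y..0} (\<lambda>_. f z) = f z * (0 - y)" using assms(3) by simp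
  moreover have "f z * (0 - y) > 0" using assms by (intro mult_pos_pos) auto
  ultimately show ?thesis by linarith
qed

lemma zero_deriv_local:
  fixes h :: "'a::euclidean_space \<Rightarrow> real"
  assumes "open S" "x \<in> S" "\<forall>y\<in>S. h y = 0"
  shows "pd b h x = 0"
proof -
  have "(h has_derivative (\<lambda>_. 0)) (at x)"
    by (rule has_derivative_transform_within_open[OF has_derivative_const[of 0] assms(1,2)])
       (use assms(3) in auto)
  then have "(\<lambda>_. 0) = frechet_derivative h (at x)" by (rule frechet_derivative_at)
  then show ?thesis unfolding pd_def by (metis)
qed

lemma grad_zero_extremum:
  fixes u :: "'a::euclidean_space \<Rightarrow> real"
  assumes "open S" "x \<in> S" "u differentiable (at x)"
    "(\<forall>y\<in>S. u y \<le> u x) \<or> (\<forall>y\<in>S. u x \<le> u y)"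
  shows "grad u x = 0"
proof -
  have d: "(u has_derivative frechet_derivative u (at x)) (at x)"
    using assms(3) frechet_derivative_works by blast
  have "frechet_derivative u (at x) = (\<lambda>v. 0)"
    by (rule differential_zero_maxmin[OF assms(2,1) d assms(4)])
  then show ?thesis unfolding grad_def pd_def by simp
qed

theorem lemma3p2:
  fixes \<Omega> :: "'a::euclidean_space set"
    and f g :: "real \<Rightarrow> real"
    and u :: "'a \<Rightarrow> real"
    and Du :: "'a \<Rightarrow> 'a"
    and \<beta> :: real
  assumes dim: "DIM('a) \<ge> 2"
    and dom: "smooth_bounded_domain \<Omega>"
    and sconv: "strictly_convex_set \<Omega>"
    and f_pos: "\<forall>s. f s > 0" and f_C2: "Ck 2 UNIV f"
    and g_pos: "\<forall>s. g s > 0" and g_C2: "Ck 2 UNIV g"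
    and G_pos: "\<forall>s>0. g s + 2 * s * deriv g s > 0"
    and u_C2: "Ck 2 \<Omega> u"
    and u_cont: "continuous_on (closure \<Omega>) u"
    and Du_cont: "continuous_on (closure \<Omega>) Du"
    and Du_grad: "\<forall>x\<in>\<Omega>. Du x = grad u x"
    and pde: "\<forall>x\<in>\<Omega>. divg (\<lambda>y. g ((norm (grad u y))\<^sup>2) *\<^sub>R grad u y) x
                 = f (u x) * (g ((norm (grad u x))\<^sup>2)
                              + 2 * (norm (grad u x))\<^sup>2 * deriv g ((norm (grad u x))\<^sup>2))"
    and bc: "\<forall>x\<in>frontier \<Omega>. u x = 0"
    and beta: "1 \<le> \<beta>" "\<beta> \<le> 2"
  shows "\<not> (\<exists>c. \<forall>x\<in>closure \<Omega>. (norm (Du x))\<^sup>2 - \<beta> * Fprim f (u x) = c)"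
proof
  assume "\<exists>c. \<forall>x\<in>closure \<Omega>. (norm (Du x))\<^sup>2 - \<beta> * Fprim f (u x) = c"
  then obtain c where hc: "\<forall>x\<in>closure \<Omega>. (norm (Du x))\<^sup>2 - \<beta> * Fprim f (u x) = c" by blast
  have op: "open \<Omega>" and bd: "bounded \<Omega>" and ne: "\<Omega> \<noteq> {}"
    using dom unfolding smooth_bounded_domain_def by auto
  have cpt: "compact (closure \<Omega>)" using bd by (simp add: compact_closure)
  have nec: "closure \<Omega> \<noteq> {}" using ne by simp
  have clo: "x \<in> \<Omega> \<or> x \<in> frontier \<Omega>" if "x \<in> closure \<Omega>" for x
    using that op by (simp add: frontier_def interior_open)
  have sub: "\<Omega> \<subseteq> closure \<Omega>" by (rule closure_subset)
  have fsub: "frontier \<Omega> \<subseteq> closure \<Omega>" by (simp add: frontier_def)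
  have fne: "frontier \<Omega> \<noteq> {}"
    using frontier_not_empty[OF ne] bd not_bounded_UNIV by metis
  have udiff: "\<forall>x\<in>\<Omega>. u differentiable (at x)"
    using u_C2 by (simp add: numeral_2_eq_2)
  have fcont: "continuous_on UNIV f"
    using f_C2 by (simp add: numeral_2_eq_2)
  have F0: "Fprim f y = 0" if "y \<ge> 0" for y
  proof -
    have "Henstock_Kurzweil_Integration.content {y..0} = 0" using that by simp
    then have "(f has_integral 0) {y..0}" by (rule has_integral_null_real)
    then show ?thesis unfolding Fprim_def by (rule integral_unique)
  qed
  obtain z where z: "z \<in> frontier \<Omega>" using fne by blast
  have c_nonneg: "c \<ge> 0"
  proof -
    have "c = (norm (Du z))\<^sup>2 - \<beta> * Fprim f (u z)" using hc z fsub by auto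
    also have "\<dots> = (norm (Du z))\<^sup>2" using bc z F0 by simp
    finally show ?thesis by simp
  qed
  show False
  proof (cases "\<exists>x\<in>\<Omega>. u x < 0")
    case True
    then obtain x1 where x1: "x1 \<in> \<Omega>" "u x1 < 0" by blast
    obtain xm where xm: "xm \<in> closure \<Omega>" "\<forall>y\<in>closure \<Omega>. u xm \<le> u y"
      using continuous_attains_inf[OF cpt nec u_cont] by blast
    have "u xm < 0" using xm x1 sub by force
    then have xmO: "xm \<in> \<Omega>" using clo[OF xm(1)] bc by auto
    have "grad u xm = 0"
      by (rule grad_zero_extremum[OF op xmO]) (use udiff xmO xm sub in auto)
    then have "Du xm = 0" using Du_grad xmO by simp
    then have "c = - \<beta> * Fprim f (u xm)" using hc xm by force
    moreover have "Fprim f (u xm) > 0"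
      unfolding Fprim_def by (rule intpos[OF fcont f_pos \<open>u xm < 0\<close>])
    ultimately have "c < 0" using beta by (simp add: mult_pos_pos)
    then show False using c_nonneg by simp
  next
    case False
    then have unn: "\<forall>x\<in>closure \<Omega>. u x \<ge> 0" using clo bc by force
    obtain xm where xm: "xm \<in> closure \<Omega>" "\<forall>y\<in>closure \<Omega>. u y \<le> u xm"
      using continuous_attains_sup[OF cpt nec u_cont] by blast
    obtain x0 where x0: "x0 \<in> \<Omega>" "\<forall>y\<in>\<Omega>. u y \<le> u x0"
    proof (cases "xm \<in> \<Omega>")
      case True
      then show ?thesis using that xm sub by blast
    next
      case False
      then have "u xm = 0" using clo[OF xm(1)] bc by auto
      obtain x0 where "x0 \<in> \<Omega>" using ne by blast
      moreover have "\<forall>y\<in>\<Omega>. u y \<le> u x0"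
        using \<open>u xm = 0\<close> xm unn sub \<open>x0 \<in> \<Omega>\<close> by (metis order.trans subsetD order_antisym)
      ultimately show ?thesis using that by blast
    qed
    have "grad u x0 = 0"
      by (rule grad_zero_extremum[OF op x0(1)]) (use udiff x0 in auto)
    then have "Du x0 = 0" using Du_grad x0 by simp
    then have "c = 0" using hc x0 sub F0 unn by force
    then have gz: "\<forall>x\<in>\<Omega>. grad u x = 0"
      using hc sub F0 unn Du_grad by force
    have "divg (\<lambda>y. g ((norm (grad u y))\<^sup>2) *\<^sub>R grad u y) x0 = 0"
      unfolding divg_def
      by (rule sum.neutral, rule ballI, rule zero_deriv_local[OF op x0(1)]) (use gz in simp)
    moreover have "f (u x0) * (g ((norm (grad u x0))\<^sup>2)
                              + 2 * (norm (grad u x0))\<^sup>2 * deriv g ((norm (grad u x0))\<^sup>2)) > 0"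
      using gz x0 f_pos g_pos by simp
    moreover have "divg (\<lambda>y. g ((norm (grad u y))\<^sup>2) *\<^sub>R grad u y) x0 = f (u x0) * (g ((norm (grad u x0))\<^sup>2)
                              + 2 * (norm (grad u x0))\<^sup>2 * deriv g ((norm (grad u x0))\<^sup>2))"
      using pde x0(1) by blast
    ultimately show False by linarith
  qed
qed

end
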